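(* Assume $0<A,B\le1$ and $B\ge B_0(A)$. Put $C=2+AB-A^2$, $\sigma=\sqrt{2(1+AB)}$, $x_*=\frac{\sigma}{2BC}$ and $U_*=P-x_*$. Then $U_*\ge\frac12$, and if $U_*<R(A,B)$ then $G_{A,B}(U_* )\ge 0$.
   Context: For $0<A,B\le1$ put $\kappa=\sqrt{1-A^2}$, $\varepsilon=\sqrt{1-B^2}$, $P=P(A,B)=\frac{1+AB}{B(A+B)}$, $M(U)=\kappa(P-U)$, $N(U)=\varepsilon\left(U+\frac{\kappa^2}{A(A+B)}\right)$, and $G_{A,B}(U)=B\cos(\pi M(U))-A\cos(\pi N(U))-(A+B)\cos(\pi U)$. Further $R(A,B)=\frac{1-\varepsilon\kappa^2/[A(A+B)]}{1+\varepsilon}$ and $B_0(A)=\frac{-A(1-\kappa)+\sqrt{A^2(1-\kappa)^2+8\kappa(1+\kappa)}}{2(1+\kappa)}$. *)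

theory Defs
  imports Complex_Main
begin

definition kap :: "real \<Rightarrow> real" where "kap A = sqrt (1 - A^2)"
definition eps :: "real \<Rightarrow> real" where "eps B = sqrt (1 - B^2)"
definition PP :: "real \<Rightarrow> real \<Rightarrow> real" where "PP A B = (1 + A*B) / (B*(A+B))"
definition MM :: "real \<Rightarrow> real \<Rightarrow> real \<Rightarrow> real" where
  "MM A B U = kap A * (PP A B - U)"
definition NN :: "real \<Rightarrow> real \<Rightarrow> real \<Rightarrow> real" where
  "NN A B U = eps B * (U + (kap A)^2 / (A*(A+B)))"
definition GG :: "real \<Rightarrow> real \<Rightarrow> real \<Rightarrow> real" where
  "GG A B U = B * cos (pi * MM A B U) - A * cos (pi * NN A B U) - (A+B) * cos (pi * U)"
definition RR :: "real \<Rightarrow> real \<Rightarrow> real" where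
  "RR A B = (1 - eps B * (kap A)^2 / (A*(A+B))) / (1 + eps B)"
definition B0 :: "real \<Rightarrow> real" where
  "B0 A = (- A * (1 - kap A) + sqrt (A^2 * (1 - kap A)^2 + 8 * kap A * (1 + kap A))) / (2 * (1 + kap A))"

end

theory Submission
  imports Defs "HOL-Analysis.Analysis"
begin

lemma jordan_aux:
  fixes t :: real
  assumes "0 \<le> t" "t \<le> 1/2"
  shows "2 * t \<le> sin (pi * t)"
proof -
  have cv: "convex_on {0..pi/2} (\<lambda>x. - sin x)"
  proof (rule convex_on_realI[where f' = "\<lambda>x. - cos x"])
    show "connected {0..pi/2::real}" by simp
    show "((\<lambda>x. - sin x) has_real_derivative - cos x) (at x)" for x :: real
      by (auto intro!: derivative_eq_intros)
    show "- cos x \<le> - cos y" if "x \<in> {0..pi/2}" "y \<in> {0..pi/2}" "x \<le> y" for x y :: real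
      using cos_monotone_0_pi_le[of x y] that by auto
  qed
  have "- sin ((1 - 2*t) *\<^sub>R 0 + (2*t) *\<^sub>R (pi/2)) \<le> (1 - 2*t) * (- sin 0) + (2*t) * (- sin (pi/2))"
    by (rule convex_onD[OF cv]) (use assms in auto)
  moreover have "(1 - 2*t) *\<^sub>R 0 + (2*t) *\<^sub>R (pi/2) = pi * t" by simp
  ultimately show ?thesis by (simp add: mult.commute)
qed

lemma cos_lower: "1 - x^2/2 \<le> cos (x::real)"
proof -
  have "cos x = 1 - 2 * (sin (x/2))^2"
    using cos_double_sin[of "x/2"] by simp
  moreover have "(sin (x/2))^2 \<le> (x/2)^2"
    using abs_sin_x_le_abs_x[of "x/2"] by (metis abs_ge_zero power2_abs power_mono)
  ultimately show ?thesis by (simp add: power_divide)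
qed

lemma poly1:
  fixes a b :: real
  assumes "0 \<le> a" "a \<le> 1" "0 \<le> b" "b \<le> 1"
  shows "0 \<le> 2*(2+(1-a)*(1-b)-(1-a)^2)*(2+(1-a)*(1-b)-(1-b)^2)-(3+(1-a)*(1-b))*((1-a)+(1-b))"
proof -
  have h1: "0 \<le> b*((3-2*b)*(2-b))" using assms by (intro mult_nonneg_nonneg) auto
  have h2: "0 \<le> a*((3-2*a)*(2-a))" using assms by (intro mult_nonneg_nonneg) auto
  have "b*b \<le> b" "a*a \<le> a" using assms by (auto simp: mult_le_one mult_left_le)
  then have "0 \<le> 8 - b - 2*b^2 - a + 4*a*b - 2*a^2"
    using assms by (simp add: power2_eq_square) (smt (verit) mult_nonneg_nonneg)
  then have h3: "0 \<le> a*b*(8 - b - 2*b^2 - a + 4*a*b - 2*a^2)" using assms by simp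
  have "2*(2+(1-a)*(1-b)-(1-a)^2)*(2+(1-a)*(1-b)-(1-b)^2)-(3+(1-a)*(1-b))*((1-a)+(1-b))
     = b*((3-2*b)*(2-b)) + a*((3-2*a)*(2-a)) + a*b*(8 - b - 2*b^2 - a + 4*a*b - 2*a^2)"
    by (simp add: algebra_simps power2_eq_square power3_eq_cube)
  then show ?thesis using h1 h2 h3 by linarith
qed

lemma poly2:
  fixes a b :: real
  assumes "0 \<le> a" "a \<le> 1" "0 \<le> b" "b \<le> 1"
  shows "0 \<le> 2*(2+(1-a)*(1-b)-(1-a)^2)^2-((1-a)+(1-b))*(3+(1-a)*(1-b))*(2+(1-a)*(1-b)-(1-a)^2)/2
            - (987/100)/4*(1-(1-a)^2)*(1+(1-a)*(1-b))"
proof -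
  have h1: "0 \<le> b*(b-2)^2/2" using assms by simp
  have "a*(987/100 - 3987/400*a) \<ge> -39/400"
  proof -
    have "987/100 - 3987/400*a \<ge> -39/400" using assms by simp
    moreover have "a*(987/100 - 3987/400*a) \<ge> a*(-39/400)"
      using assms mult_left_mono[of "-39/400" "987/100 - 3987/400*a" a] by linarith
    ultimately show ?thesis using assms by linarith
  qed
  then have "0 \<le> 13/100 + a*(987/100 - 3987/400*a) + 5/2*a^3" using assms by simp
  then have h2: "0 \<le> a*(13/100 + a*(987/100 - 3987/400*a) + 5/2*a^3)" using assms by simp
  have "b*b \<le> b" "a*a \<le> a" "a*a*a \<le> 1" using assms by (auto simp: mult_le_one mult_left_le)
  then have "0 \<le> 187/200 + 3/2*b - b*b + 39/400*a + 1/2*(a*b) + 1/2*(a*(b*b)) + 187/400*(a*a) - 1/2*(a*a*a)"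
  proof -
    have "0 \<le> a*b" "0 \<le> a*(b*b)" "0 \<le> a*a" using assms by auto
    then show ?thesis using \<open>b*b \<le> b\<close> \<open>a*a*a \<le> 1\<close> assms
      by linarith
  qed
  then have h3: "0 \<le> a*b*(187/200 + 3/2*b - b*b + 39/400*a + 1/2*(a*b) + 1/2*(a*(b*b)) + 187/400*(a*a) - 1/2*(a*a*a))"
    using assms by simp
  have "2*(2+(1-a)*(1-b)-(1-a)^2)^2-((1-a)+(1-b))*(3+(1-a)*(1-b))*(2+(1-a)*(1-b)-(1-a)^2)/2
            - (987/100)/4*(1-(1-a)^2)*(1+(1-a)*(1-b))
     = b*(b-2)^2/2 + a*(13/100 + a*(987/100 - 3987/400*a) + 5/2*a^3)
       + a*b*(187/200 + 3/2*b - b*b + 39/400*a + 1/2*(a*b) + 1/2*(a*(b*b)) + 187/400*(a*a) - 1/2*(a*a*a))"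
    by (simp add: field_simps) (simp add: algebra_simps power2_eq_square power3_eq_cube power4_eq_xxxx)
  then show ?thesis using h1 h2 h3 by linarith
qed



theorem mainTheorem8:
  fixes A B :: real
  assumes "0 < A" "A \<le> 1" "0 < B" "B \<le> 1" "B \<ge> B0 A"
  shows "let C = 2 + A*B - A^2; \<sigma> = sqrt (2*(1 + A*B)); xs = \<sigma> / (2*B*C);
             Us = PP A B - xs
         in Us \<ge> 1/2 \<and> (Us < RR A B \<longrightarrow> GG A B Us \<ge> 0)"
proof -
  define C where "C = 2 + A*B - A^2"
  define \<sigma> where "\<sigma> = sqrt (2*(1 + A*B))"
  define xs where "xs = \<sigma> / (2*B*C)"
  define Us where "Us = PP A B - xs"
  have AB0: "0 < A*B" "A*B \<le> 1" using assms by (auto simp: mult_le_one)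
  have A2: "A^2 \<le> 1" using assms by (simp add: power_le_one)
  have C1: "C \<ge> 1" unfolding C_def using AB0 A2 by linarith
  have sig0: "0 \<le> \<sigma>" unfolding \<sigma>_def using AB0 by simp
  have sig2: "\<sigma>^2 = 2*(1+A*B)" unfolding \<sigma>_def using AB0 by simp
  have sigle: "\<sigma> \<le> (3+A*B)/2"
  proof -
    have "2*(1+A*B) \<le> ((3+A*B)/2)^2"
      using sum_power2_ge_zero[of "1 - A*B" 0] by (simp add: power2_eq_square algebra_simps)
    then have "\<sigma> \<le> sqrt (((3+A*B)/2)^2)" unfolding \<sigma>_def by (rule real_sqrt_le_mono)
    also have "\<dots> = (3+A*B)/2" using AB0 by simp
    finally show ?thesis .
  qed
  have pa: "0 \<le> 1 - A" "1 - A \<le> 1" "0 \<le> 1 - B" "1 - B \<le> 1" using assms by auto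
  have ABp: "0 < A + B" using assms by simp
  have PPm: "PP A B - 1/2 = (2+A*B-B^2)/(2*B*(A+B))"
  proof -
    have "0 < A*B + B*B" "0 < B*(A+B)" using assms by (auto intro: add_pos_pos)
    then show ?thesis unfolding PP_def using assms by (simp add: field_simps power2_eq_square)
  qed
  have part1: "Us \<ge> 1/2"
  proof -
    have "\<sigma>*(A+B) \<le> (3+A*B)/2*(A+B)" using sigle ABp by (simp add: mult_right_mono)
    also have "\<dots> \<le> C*(2+A*B-B^2)"
    proof -
      have "0 \<le> 2*(C*(2+A*B-B^2)) - (3+A*B)*(A+B)" using poly1[OF pa] unfolding C_def
        by (simp add: mult.assoc[symmetric] distrib_right right_diff_distrib left_diff_distrib)
      moreover have "(3+A*B)/2*(A+B) = ((3+A*B)*(A+B))/2" by simp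
      ultimately show ?thesis by linarith
    qed
    finally have k: "0 \<le> C*(2+A*B-B^2) - \<sigma>*(A+B)" by simp
    have d1: "2*B*(A+B) \<noteq> 0" "2*B*C \<noteq> 0" using assms C1 ABp by auto
    have "(2+A*B-B^2)/(2*B*(A+B)) - xs
        = ((2+A*B-B^2)*(2*B*C) - \<sigma>*(2*B*(A+B)))/(2*B*(A+B)*(2*B*C))"
      unfolding xs_def by (rule diff_frac_eq[OF d1])
    also have "\<dots> = (2*B*(C*(2+A*B-B^2) - \<sigma>*(A+B)))/(2*B*(A+B)*(2*B*C))"
      by (simp add: algebra_simps)
    also have "\<dots> \<ge> 0" using k assms C1 ABp by (intro divide_nonneg_pos) auto
    finally show ?thesis unfolding Us_def using PPm by linarith
  qed
  have part2: "GG A B Us \<ge> 0" if lt: "Us < RR A B"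
  proof -
    define k where "k = kap A"
    define e where "e = eps B"
    have k2: "k^2 = 1 - A^2" unfolding k_def kap_def using A2 by simp
    have k0: "0 \<le> k" unfolding k_def kap_def using A2 by simp
    have e0: "0 \<le> e" unfolding e_def eps_def using assms by (simp add: power_le_one)
    have R1: "RR A B \<le> 1"
    proof -
      have "0 \<le> e * k^2 / (A*(A+B))" using e0 assms by simp
      then have "1 - e * k^2 / (A*(A+B)) \<le> 1 + e" using e0 by linarith
      then show ?thesis unfolding RR_def using e0 by (simp add: k_def e_def divide_le_eq)
    qed
    define t where "t = Us - 1/2"
    have t0: "0 \<le> t" "t \<le> 1/2" using part1 lt R1 unfolding t_def by auto
    have cU: "cos (pi * Us) = - sin (pi * t)"
    proof -
      have "pi * Us = pi * t + pi/2" unfolding t_def by (simp add: algebra_simps)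
      then show ?thesis by (simp add: cos_add)
    qed
    have sU: "2*t \<le> sin (pi*t)" using jordan_aux t0 by simp
    have M: "MM A B Us = k * xs" unfolding MM_def k_def Us_def by simp
    have cM: "1 - (pi*(k*xs))^2/2 \<le> cos (pi * MM A B Us)" unfolding M by (rule cos_lower)
    have cN: "cos (pi * NN A B Us) \<le> 1" by simp
    have "GG A B Us \<ge> B*(1 - (pi*(k*xs))^2/2) - A + (A+B)*(2*t)"
    proof -
      have "B*(1 - (pi*(k*xs))^2/2) \<le> B * cos (pi * MM A B Us)" using cM assms by simp
      moreover have "A * cos (pi * NN A B Us) \<le> A" using cN assms by simp
      moreover have "(A+B)*(2*t) \<le> (A+B) * sin (pi*t)" using sU ABp by simp
      ultimately show ?thesis unfolding GG_def cU by simp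
    qed
    moreover have eq1: "B*(1 - (pi*(k*xs))^2/2) - A + (A+B)*(2*t)
        = 2/B - 2*(A+B)*xs - B*pi^2*k^2*xs^2/2"
    proof -
      have "t = (2+A*B-B^2)/(2*B*(A+B)) - xs" unfolding t_def Us_def using PPm by linarith
      then have tx: "t + xs = (2+A*B-B^2)/(2*B*(A+B))" by simp
      have nz: "B \<noteq> 0" "A + B \<noteq> 0" using assms ABp by auto
      have nz2: "A*(B*2) + B*(B*2) \<noteq> 0" "A*B + B*B \<noteq> 0" using assms by (auto intro!: add_pos_pos order.strict_implies_not_eq[symmetric])
      have h: "(A+B)*(2*(t+xs)) = (2+A*B-B^2)/B" unfolding tx using nz nz2 by (simp add: field_simps)
      have h2: "B - A + (2+A*B-B^2)/B = 2/B" using nz by (simp add: field_simps power2_eq_square)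
      have h3: "(A+B)*(2*t) = (A+B)*(2*(t+xs)) - 2*(A+B)*xs" by (simp add: algebra_simps)
      have h4: "B*(1-(pi*(k*xs))^2/2) = B - B*pi^2*k^2*xs^2/2" by (simp add: power_mult_distrib algebra_simps)
      show ?thesis using h h2 h3 h4 by linarith
    qed
    moreover have "0 \<le> 2/B - 2*(A+B)*xs - B*pi^2*k^2*xs^2/2"
    proof -
      have pi2: "pi^2 \<le> 987/100"
      proof -
        have p: "pi \<le> 3.1416" using pi_approx(2) by simp
        have "pi*pi \<le> 3.1416*3.1416" using p by (intro mult_mono) auto
        then show ?thesis by (simp add: power2_eq_square)
      qed
      define Q where "Q = (1-A^2)*(1+A*B)"
      define W where "W = (A+B)*(3+A*B)*C"
      define S where "S = (A+B)*\<sigma>*C"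
      have q0: "0 \<le> Q" unfolding Q_def using A2 AB0 by simp
      have f1: "pi^2*Q \<le> 987/100*Q"
        using pi2 q0 by (rule mult_right_mono)
      have "(A+B)*\<sigma>*C \<le> (A+B)*((3+A*B)/2)*C"
        using sigle ABp C1 by (intro mult_right_mono mult_left_mono) auto
      then have f2: "S \<le> W/2" unfolding S_def W_def by simp
      have eqp: "2*(2+(1-(1-A))*(1-(1-B))-(1-(1-A))^2)^2-((1-(1-A))+(1-(1-B)))*(3+(1-(1-A))*(1-(1-B)))*(2+(1-(1-A))*(1-(1-B))-(1-(1-A))^2)/2
            - (987/100)/4*(1-(1-(1-A))^2)*(1+(1-(1-A))*(1-(1-B))) = 2*C^2 - W/2 - 987/400*Q"
        unfolding C_def W_def Q_def by simp
      have f3: "0 \<le> 2*C^2 - W/2 - 987/400*Q" using poly2[OF pa] unfolding eqp .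
      have key: "0 \<le> 2*C^2 - (A+B)*\<sigma>*C - pi^2*((1-A^2)*(1+A*B))/4"
        using f1 f2 f3 unfolding S_def[symmetric] Q_def[symmetric] by linarith
      have "2/B - 2*(A+B)*xs - B*pi^2*k^2*xs^2/2
          = (2*C^2 - (A+B)*\<sigma>*C - pi^2*((1-A^2)*(1+A*B))/4) / (B*C^2)"
        unfolding xs_def k2 using assms C1 sig2
        by (simp add: field_simps power2_eq_square)
      also have "\<dots> \<ge> 0" using key assms C1 by simp
      finally show ?thesis .
    qed
    ultimately show ?thesis by linarith
  qed
  show ?thesis unfolding Let_def C_def[symmetric] \<sigma>_def[symmetric] xs_def[symmetric] Us_def[symmetric]
    using part1 part2 by simp
qed

end
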